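(* For every $d\ge1$, the maximum of the index $[D_{2d}:L]$, over all sublattices $L$ of $D_{2d}$ generated by $2d$ linearly independent roots of $D_{2d}$, equals $2^{d-1}$.
   Context: $D_n=\{x\in\mathbb Z^n:\sum_ix_i\equiv0\pmod2\}$ with the standard inner product; its roots are its vectors of squared length $2$, i.e. $\pm b_i\pm b_j$ ($i\ne j$) for the standard basis $b_1,\dots,b_n$. *)

theory Defs
  imports Complex_Main
begin

text \<open>Vectors of Z^n are modelled as functions nat => int vanishing outside {0..<n}.\<close>

definition Dn :: "nat \<Rightarrow> (nat \<Rightarrow> int) set" where
  "Dn n = {x. (\<forall>i\<ge>n. x i = 0) \<and> even (\<Sum>i<n. x i)}"

definition Dn_roots :: "nat \<Rightarrow> (nat \<Rightarrow> int) set" where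
  "Dn_roots n = {x \<in> Dn n. (\<Sum>i<n. (x i)^2) = 2}"

definition int_span :: "nat \<Rightarrow> (nat \<Rightarrow> nat \<Rightarrow> int) \<Rightarrow> (nat \<Rightarrow> int) set" where
  "int_span m r = {(\<lambda>j. \<Sum>i<m. c i * r i j) | c :: nat \<Rightarrow> int. True}"

definition lin_indep :: "nat \<Rightarrow> (nat \<Rightarrow> nat \<Rightarrow> int) \<Rightarrow> bool" where
  "lin_indep m r \<longleftrightarrow> (\<forall>c :: nat \<Rightarrow> real.
      (\<forall>j. (\<Sum>i<m. c i * real_of_int (r i j)) = 0) \<longrightarrow> (\<forall>i<m. c i = 0))"

text \<open>Group index [M : L]: number of cosets of L in M (0 if infinite).\<close>
definition lattice_index :: "(nat \<Rightarrow> int) set \<Rightarrow> (nat \<Rightarrow> int) set \<Rightarrow> nat" where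
  "lattice_index M L = card ((\<lambda>x. {(\<lambda>j. x j + y j) | y. y \<in> L}) ` M)"

end

theory Submission
  imports Defs "HOL-Library.Function_Algebras"
begin


definition supp_in :: "nat set \<Rightarrow> (nat\<Rightarrow>int) \<Rightarrow> bool" where
  "supp_in V x \<longleftrightarrow> (\<forall>j. j \<notin> V \<longrightarrow> x j = 0)"

definition rt :: "nat \<Rightarrow> nat \<Rightarrow> int \<Rightarrow> int \<Rightarrow> nat \<Rightarrow> int" where
  "rt a b s t = (\<lambda>j. if j = a then s else if j = b then t else 0)"

definition isroot :: "nat set \<Rightarrow> (nat\<Rightarrow>int) \<Rightarrow> bool" where
  "isroot V v \<longleftrightarrow> (\<exists>a b s t. a \<in> V \<and> b \<in> V \<and> a \<noteq> b \<and> (s = 1 \<or> s = -1) \<and> (t = 1 \<or> t = -1) \<and> v = rt a b s t)"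

definition lat :: "(nat\<Rightarrow>int) set \<Rightarrow> (nat\<Rightarrow>int) set" where
  "lat R = {x. \<exists>c. x = (\<lambda>j. \<Sum>v\<in>R. c v * v j)}"

definition indep :: "(nat\<Rightarrow>int) set \<Rightarrow> bool" where
  "indep R \<longleftrightarrow> (\<forall>c :: (nat\<Rightarrow>int) \<Rightarrow> real. (\<forall>j. (\<Sum>v\<in>R. c v * of_int (v j)) = 0) \<longrightarrow> (\<forall>v\<in>R. c v = 0))"

definition ind :: "nat set \<Rightarrow> nat \<Rightarrow> int" where
  "ind S = (\<lambda>j. if j \<in> S then 1 else 0)"

lemma lat_zero: "(\<lambda>j. 0) \<in> lat R"
  unfolding lat_def by (rule CollectI, rule exI[of _ "\<lambda>v. 0"]) simp

lemma lat_add: "x \<in> lat R \<Longrightarrow> y \<in> lat R \<Longrightarrow> (\<lambda>j. x j + y j) \<in> lat R"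
  unfolding lat_def
  apply clarify
  subgoal for c d by (rule exI[of _ "\<lambda>v. c v + d v"]) (simp add: sum.distrib algebra_simps)
  done

lemma lat_smult: "x \<in> lat R \<Longrightarrow> (\<lambda>j. k * x j) \<in> lat R"
  unfolding lat_def
  apply clarify
  subgoal for c by (rule exI[of _ "\<lambda>v. k * c v"]) (simp add: sum_distrib_left algebra_simps)
  done

lemma lat_neg: "x \<in> lat R \<Longrightarrow> (\<lambda>j. - x j) \<in> lat R"
  using lat_smult[of x R "-1"] by simp

lemma lat_sub: "x \<in> lat R \<Longrightarrow> y \<in> lat R \<Longrightarrow> (\<lambda>j. x j - y j) \<in> lat R"
  using lat_add[of x R "\<lambda>j. - y j"] lat_neg[of y R] by simp

lemma lat_mem: "finite R \<Longrightarrow> v \<in> R \<Longrightarrow> v \<in> lat R"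
  unfolding lat_def
  apply (rule CollectI, rule exI[of _ "\<lambda>w. if w = v then 1 else 0"])
  apply (rule ext)
  subgoal for j
    apply (subst sum.cong[of R R _ "\<lambda>w. if w = v then w j else 0"])
    apply simp_all
    done
  done

lemma lat_subset:
  assumes "finite R'" "R' \<subseteq> lat R"
  shows "lat R' \<subseteq> lat R"
proof
  fix x assume "x \<in> lat R'"
  then obtain c where x: "x = (\<lambda>j. \<Sum>w\<in>R'. c w * w j)" unfolding lat_def by auto
  have "\<forall>w\<in>R'. \<exists>d. w = (\<lambda>j. \<Sum>v\<in>R. d v * v j)" using assms(2) unfolding lat_def by auto
  then obtain D where D: "\<And>w. w \<in> R' \<Longrightarrow> w = (\<lambda>j. \<Sum>v\<in>R. D w v * v j)" by metis
  have "x = (\<lambda>j. \<Sum>w\<in>R'. c w * (\<Sum>v\<in>R. D w v * v j))"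
    unfolding x by (rule ext, rule sum.cong, simp, subst D, auto)
  also have "\<dots> = (\<lambda>j. \<Sum>v\<in>R. (\<Sum>w\<in>R'. c w * D w v) * v j)"
    by (simp add: sum_distrib_left sum_distrib_right sum.swap[of _ R' R] mult.assoc)
  finally have xe: "x = (\<lambda>j. \<Sum>v\<in>R. (\<Sum>w\<in>R'. c w * D w v) * v j)" .
  show "x \<in> lat R" unfolding lat_def
    by (rule CollectI, rule exI[of _ "\<lambda>v. \<Sum>w\<in>R'. c w * D w v"]) (rule xe)
qed

lemma indep_subset:
  assumes "indep R" "finite R" "R' \<subseteq> R" shows "indep R'"
  unfolding indep_def
proof (intro allI impI ballI)
  fix c :: "(nat\<Rightarrow>int) \<Rightarrow> real" and v
  assume h: "\<forall>j. (\<Sum>v\<in>R'. c v * of_int (v j)) = 0" and v: "v \<in> R'"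
  let ?c = "\<lambda>w. if w \<in> R' then c w else 0"
  have "\<forall>j. (\<Sum>w\<in>R. ?c w * of_int (w j)) = 0"
  proof
    fix j
    have "(\<Sum>w\<in>R. ?c w * of_int (w j)) = (\<Sum>w\<in>R'. ?c w * of_int (w j))"
      by (rule sum.mono_neutral_right) (use assms in \<open>auto intro: finite_subset\<close>)
    also have "\<dots> = 0" using h by simp
    finally show "(\<Sum>w\<in>R. ?c w * of_int (w j)) = 0" .
  qed
  moreover have "(\<forall>j. (\<Sum>w\<in>R. ?c w * of_int (w j)) = 0) \<longrightarrow> (\<forall>v\<in>R. ?c v = 0)"
    using assms(1) unfolding indep_def by (rule spec)
  ultimately have "?c v = 0" using v assms(3) by blast
  then show "c v = 0" using v by simp
qed

lemma sum_app: "(\<Sum>v\<in>A. f v) (j::'a) = (\<Sum>v\<in>A. f v j :: 'b::comm_monoid_add)"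
  by (induction A rule: infinite_finite_induct) auto

interpretation fv: vector_space "\<lambda>(c::real) (f::nat\<Rightarrow>real) j. c * f j"
  by unfold_locales (auto simp: algebra_simps fun_eq_iff)

lemma dim_bound:
  assumes "finite W" "finite R" "indep R" "\<forall>v\<in>R. supp_in W v"
  shows "card R \<le> card W"
proof -
  define F where "F = (\<lambda>(v::nat\<Rightarrow>int) j. real_of_int (v j))"
  have injF: "inj F" unfolding F_def inj_def fun_eq_iff by simp
  define e where "e = (\<lambda>k (j::nat). if j = k then 1 else (0::real))"
  have ind: "fv.independent (F ` R)"
  proof (rule fv.independent_if_scalars_zero)
    show "finite (F ` R)" using assms by simp
    fix c u assume h: "(\<Sum>v\<in>F ` R. (\<lambda>j. c v * v j)) = 0" and u: "u \<in> F ` R"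
    then obtain w where w: "w \<in> R" "u = F w" by auto
    have "\<forall>j. (\<Sum>v\<in>R. (c \<circ> F) v * of_int (v j)) = 0"
    proof
      fix j
      have "(\<Sum>v\<in>F ` R. (\<lambda>j. c v * v j)) j = 0" using h by simp
      then have "(\<Sum>v\<in>F ` R. c v * v j) = 0" by (simp add: sum_app)
      then show "(\<Sum>v\<in>R. (c \<circ> F) v * of_int (v j)) = 0"
        by (subst (asm) sum.reindex) (use injF in \<open>auto simp: inj_on_def F_def\<close>)
    qed
    then have "(c \<circ> F) w = 0" using assms(3) w unfolding indep_def by blast
    then show "c u = 0" using w by simp
  qed
  have sp: "F ` R \<subseteq> fv.span (e ` W)"
  proof
    fix u assume "u \<in> F ` R"
    then obtain v where v: "v \<in> R" "u = F v" by auto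
    have "u = (\<Sum>k\<in>W. (\<lambda>j. u k * e k j))"
      using assms(1,4) v by (auto simp: fun_eq_iff sum_app e_def F_def supp_in_def if_distrib sum.delta' cong: if_cong)
    also have "\<dots> \<in> fv.span (e ` W)"
      by (intro fv.span_sum fv.span_scale fv.span_base) auto
    finally show "u \<in> fv.span (e ` W)" .
  qed
  have "card (F ` R) \<le> card (e ` W)"
    using fv.independent_span_bound[OF _ ind sp] assms by auto
  also have "\<dots> \<le> card W" by (rule card_image_le[OF assms(1)])
  finally show ?thesis using card_image[OF inj_on_subset[OF injF]] by simp
qed



lemma pm1_sq: "s = 1 \<or> s = -1 \<Longrightarrow> s * s = (1::int)" by auto

lemma root_supp: "isroot V r \<Longrightarrow> supp_in V r"
  unfolding isroot_def supp_in_def rt_def by auto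

lemma root_at:
  assumes "isroot V r" "r a \<noteq> 0"
  shows "\<exists>b \<sigma> \<tau>. a \<in> V \<and> b \<in> V \<and> b \<noteq> a \<and> (\<sigma> = 1 \<or> \<sigma> = -1) \<and> (\<tau> = 1 \<or> \<tau> = -1) \<and> r = rt a b \<sigma> \<tau>"
proof -
  obtain p q s t where h: "p \<in> V" "q \<in> V" "p \<noteq> q" "s = 1 \<or> s = -1" "t = 1 \<or> t = -1" "r = rt p q s t"
    using assms(1) unfolding isroot_def by blast
  have "a = p \<or> a = q" using assms(2) h(6) unfolding rt_def by (auto split: if_splits)
  then show ?thesis
  proof
    assume "a = p" then show ?thesis using h by blast
  next
    assume "a = q"
    moreover have "rt p q s t = rt q p t s" using h(3) unfolding rt_def by (auto simp: fun_eq_iff)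
    ultimately show ?thesis using h by blast
  qed
qed

lemma root_avoid: "isroot V r \<Longrightarrow> r a = 0 \<Longrightarrow> isroot (V - {a}) r"
proof -
  assume r: "isroot V r" "r a = 0"
  then obtain p q s t where h: "p \<in> V" "q \<in> V" "p \<noteq> q" "s = 1 \<or> s = -1" "t = 1 \<or> t = -1" "r = rt p q s t"
    unfolding isroot_def by blast
  have "p \<noteq> a" using h r(2) unfolding rt_def by auto
  moreover have "q \<noteq> a" using h r(2) unfolding rt_def by auto
  ultimately show ?thesis unfolding isroot_def using h by blast
qed

lemma root_card: "isroot V r \<Longrightarrow> card {a\<in>V. r a \<noteq> 0} = 2"
proof -
  assume "isroot V r"
  then obtain p q s t where h: "p \<in> V" "q \<in> V" "p \<noteq> q" "s = 1 \<or> s = -1" "t = 1 \<or> t = -1" "r = rt p q s t"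
    unfolding isroot_def by blast
  then have "{a\<in>V. r a \<noteq> 0} = {p, q}" unfolding rt_def by auto
  then show ?thesis using h(3) by simp
qed

lemma card_filter_sum: "finite A \<Longrightarrow> card {x\<in>A. P x} = (\<Sum>x\<in>A. if P x then 1 else (0::nat))"
  by (simp add: sum.If_cases Int_def)

lemma deg_sum:
  assumes "finite V" "finite R" "\<forall>v\<in>R. isroot V v"
  shows "(\<Sum>a\<in>V. card {v\<in>R. v a \<noteq> 0}) = 2 * card R"
proof -
  have "(\<Sum>a\<in>V. card {v\<in>R. v a \<noteq> 0}) = (\<Sum>a\<in>V. \<Sum>v\<in>R. if v a \<noteq> 0 then 1 else (0::nat))"
    using assms(2) by (simp add: card_filter_sum)
  also have "\<dots> = (\<Sum>v\<in>R. \<Sum>a\<in>V. if v a \<noteq> 0 then 1 else (0::nat))" by (rule sum.swap)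
  also have "\<dots> = (\<Sum>v\<in>R. card {a\<in>V. v a \<noteq> 0})"
    using assms(1) by (simp add: card_filter_sum)
  also have "\<dots> = (\<Sum>v\<in>R. 2)" using assms(3) root_card by (intro sum.cong) auto
  finally show ?thesis by simp
qed

lemma indep_T:
  fixes c :: "(nat\<Rightarrow>int) \<Rightarrow> real"
  assumes "indep R" "finite R" "T \<subseteq> R" "\<forall>j. (\<Sum>v\<in>T. c v * of_int (v j)) = 0" "v \<in> T"
  shows "c v = 0"
proof -
  have "indep T" using indep_subset[OF assms(1-3)] .
  then have "(\<forall>j. (\<Sum>v\<in>T. c v * of_int (v j)) = 0) \<longrightarrow> (\<forall>v\<in>T. c v = 0)"
    unfolding indep_def by (rule spec)
  then show ?thesis using assms(4,5) by blast
qed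

lemma elim_step:
  assumes "r \<in> lat R" "(\<lambda>j. (x j - \<sigma> * x a * r j) - ind S j) \<in> lat R"
  shows "(\<lambda>j. x j - ind S j) \<in> lat R"
  using lat_add[OF assms(2) lat_smult[OF assms(1), of "\<sigma> * x a"]] by simp

lemma elim_props:
  assumes "supp_in V x" "r = rt a b \<sigma> \<beta>" "a \<in> V" "b \<in> V" "\<sigma> = 1 \<or> \<sigma> = -1"
  shows "supp_in V (\<lambda>j. x j - \<sigma> * x a * r j)" "(\<lambda>j. x j - \<sigma> * x a * r j) a = 0"
  using assms unfolding supp_in_def rt_def by auto



definition good :: "nat set \<Rightarrow> (nat\<Rightarrow>int) set \<Rightarrow> bool" where
  "good V R \<longleftrightarrow> (\<exists>A\<subseteq>V. 2 * card A \<le> card V \<and> (\<forall>x. supp_in V x \<longrightarrow> (\<exists>S\<subseteq>A. (\<lambda>j. x j - ind S j) \<in> lat R)))"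

lemma finish1:
  assumes "r \<in> R" "finite R" "R'' \<subseteq> lat R" "finite R''" "r = rt a b \<sigma> \<beta>" "a \<in> V" "b \<in> V"
    "\<sigma> = 1 \<or> \<sigma> = -1" "supp_in V x"
    "\<forall>y. supp_in (V - {a}) y \<longrightarrow> (\<exists>S\<subseteq>A. (\<lambda>j. y j - ind S j) \<in> lat R'')"
  shows "\<exists>S\<subseteq>A. (\<lambda>j. x j - ind S j) \<in> lat R"
proof -
  let ?x1 = "\<lambda>j. x j - \<sigma> * x a * r j"
  have "supp_in V ?x1" "?x1 a = 0" using elim_props[OF assms(9,5,6,7,8)] by auto
  then have "supp_in (V - {a}) ?x1" unfolding supp_in_def by auto
  then obtain S where S: "S \<subseteq> A" "(\<lambda>j. ?x1 j - ind S j) \<in> lat R''" using assms(10) by blast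
  have "lat R'' \<subseteq> lat R" by (rule lat_subset[OF assms(4,3)])
  with S have "(\<lambda>j. ?x1 j - ind S j) \<in> lat R" by blast
  from elim_step[OF lat_mem[OF assms(2,1)] this] S(1) show ?thesis by blast
qed

lemma lat_R_sub: "finite R \<Longrightarrow> R' \<subseteq> R \<Longrightarrow> R' \<subseteq> lat R"
  using lat_mem by blast

lemma case_leaf:
  assumes "finite V" "finite R" "card R = card V" "\<forall>v\<in>R. isroot V v" "indep R" "a \<in> V"
    "{v\<in>R. v a \<noteq> 0} = {r}"
    "\<And>R'. finite R' \<Longrightarrow> card R' = card (V - {a}) \<Longrightarrow> \<forall>v\<in>R'. isroot (V - {a}) v \<Longrightarrow> indep R' \<Longrightarrow> good (V - {a}) R'"
  shows "good V R"
proof -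
  have r: "r \<in> R" "r a \<noteq> 0" using assms(7) by auto
  obtain b \<sigma> \<tau> where rb: "b \<in> V" "b \<noteq> a" "\<sigma> = 1 \<or> \<sigma> = -1" "r = rt a b \<sigma> \<tau>"
    using root_at[of V r a] assms(4) r by blast
  let ?R' = "R - {r}"
  have roots: "\<forall>v\<in>?R'. isroot (V - {a}) v"
  proof
    fix v assume v: "v \<in> ?R'"
    then have "v a = 0" using assms(7) by auto
    then show "isroot (V - {a}) v" using root_avoid assms(4) v by blast
  qed
  have "card ?R' = card (V - {a})" using assms(2,3,6) r by simp
  moreover have "indep ?R'" using indep_subset[OF assms(5,2)] by blast
  ultimately have "good (V - {a}) ?R'" using assms(8) assms(2) roots by blast
  then obtain A where A: "A \<subseteq> V - {a}" "2 * card A \<le> card (V - {a})"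
    "\<forall>y. supp_in (V - {a}) y \<longrightarrow> (\<exists>S\<subseteq>A. (\<lambda>j. y j - ind S j) \<in> lat ?R')"
    unfolding good_def by blast
  have "card (V - {a}) \<le> card V" using assms(1) by (simp add: card_mono)
  moreover have "\<forall>x. supp_in V x \<longrightarrow> (\<exists>S\<subseteq>A. (\<lambda>j. x j - ind S j) \<in> lat R)"
    using finish1[OF r(1) assms(2) lat_R_sub[OF assms(2)] _ rb(4) assms(6) rb(1) rb(3) _ A(3)] assms(2) by blast
  ultimately show ?thesis unfolding good_def using A(1,2) by (intro exI[of _ A]) auto
qed

lemma sum_two_out:
  assumes "finite R" "r \<in> R" "r' \<in> R" "r \<noteq> r'"
  shows "(\<Sum>v\<in>R. f v) = f r + f r' + (\<Sum>v\<in>R - {r, r'}. f v)"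
proof -
  have "R = insert r (insert r' (R - {r, r'}))" using assms by auto
  then have "(\<Sum>v\<in>R. f v) = (\<Sum>v\<in>insert r (insert r' (R - {r, r'})). f v)" by simp
  also have "\<dots> = f r + f r' + (\<Sum>v\<in>R - {r, r'}. f v)" using assms by (simp add: add.assoc)
  finally show ?thesis .
qed

lemma pm1_cases: "s = 1 \<or> s = -1 \<Longrightarrow> t = 1 \<or> t = -1 \<Longrightarrow> s * t = 1 \<or> s * t = (-1::int)"
  by auto

lemma case_bc:
  assumes "finite V" "finite R" "card R = card V" "\<forall>v\<in>R. isroot V v" "indep R" "a \<in> V"
    "{v\<in>R. v a \<noteq> 0} = {r, r'}" "r \<noteq> r'" "r = rt a b \<sigma> \<beta>" "r' = rt a c \<sigma>' \<gamma>"
    "b \<in> V" "c \<in> V" "b \<noteq> a" "c \<noteq> a" "b \<noteq> c"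
    "\<sigma> = 1 \<or> \<sigma> = -1" "\<beta> = 1 \<or> \<beta> = -1" "\<sigma>' = 1 \<or> \<sigma>' = -1" "\<gamma> = 1 \<or> \<gamma> = -1"
    "\<And>R'. finite R' \<Longrightarrow> card R' = card (V - {a}) \<Longrightarrow> \<forall>v\<in>R'. isroot (V - {a}) v \<Longrightarrow> indep R' \<Longrightarrow> good (V - {a}) R'"
  shows "good V R"
proof -
  have r: "r \<in> R" "r' \<in> R" using assms(7) by auto
  define w where "w = (\<lambda>j. \<sigma>' * r j - \<sigma> * r' j)"
  have wrt: "w = rt b c (\<sigma>' * \<beta>) (- \<sigma> * \<gamma>)"
    unfolding w_def assms(9,10) rt_def using assms(13,14,15) by (auto simp: fun_eq_iff)
  have wroot: "isroot (V - {a}) w"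
    unfolding isroot_def wrt using assms(11-19) pm1_cases[of "\<sigma>'" \<beta>] pm1_cases[of "-\<sigma>" \<gamma>]
    by (intro exI[of _ b] exI[of _ c] exI[of _ "\<sigma>' * \<beta>"] exI[of _ "- \<sigma> * \<gamma>"]) auto
  have wlat: "w \<in> lat R"
    unfolding w_def using lat_sub[OF lat_smult[OF lat_mem[OF assms(2) r(1)], of "\<sigma>'"]
        lat_smult[OF lat_mem[OF assms(2) r(2)], of "\<sigma>"]] .
  have wnot: "w \<notin> R - {r, r'}"
  proof
    assume wR: "w \<in> R - {r, r'}"
    define c0 :: "(nat\<Rightarrow>int) \<Rightarrow> real" where
      "c0 = (\<lambda>v. if v = r then of_int \<sigma>' else if v = r' then - of_int \<sigma> else -1)"
    have "\<forall>j. (\<Sum>v\<in>{r, r', w}. c0 v * of_int (v j)) = 0"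
      using wR assms(8) by (auto simp: c0_def w_def)
    then have "c0 r = 0" using indep_T[OF assms(5,2), of "{r, r', w}" c0 r] wR r by auto
    then show False using assms(18) by (auto simp: c0_def)
  qed
  let ?R' = "insert w (R - {r, r'})"
  have cardR: "card R \<ge> 2"
  proof -
    have "card {r, r'} \<le> card R" using r assms(2) by (intro card_mono) auto
    then show ?thesis using assms(8) by simp
  qed
  have "card ?R' = card (R - {r, r'}) + 1" using wnot assms(2) by simp
  also have "\<dots> = card R - 1" using r assms(2,8) cardR by (simp add: card_Diff_subset)
  also have "\<dots> = card (V - {a})" using assms(3,6,1) by simp
  finally have card': "card ?R' = card (V - {a})" .
  have roots: "\<forall>v\<in>?R'. isroot (V - {a}) v"
  proof
    fix v assume v: "v \<in> ?R'"
    show "isroot (V - {a}) v"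
    proof (cases "v = w")
      case True then show ?thesis using wroot by simp
    next
      case False
      then have "v \<in> R - {r, r'}" using v by auto
      then have "v a = 0" "isroot V v" using assms(7,4) by auto
      then show ?thesis using root_avoid by blast
    qed
  qed
  have ind': "indep ?R'"
    unfolding indep_def
  proof (intro allI impI)
    fix c :: "(nat\<Rightarrow>int) \<Rightarrow> real"
    assume h: "\<forall>j. (\<Sum>v\<in>?R'. c v * of_int (v j)) = 0"
    define c0 where "c0 = (\<lambda>v. if v = r then c w * of_int \<sigma>' else if v = r' then - c w * of_int \<sigma> else c v)"
    have "\<forall>j. (\<Sum>v\<in>R. c0 v * of_int (v j)) = 0"
    proof
      fix j
      have e1: "(\<Sum>v\<in>R - {r, r'}. c0 v * of_int (v j)) = (\<Sum>v\<in>R - {r, r'}. c v * of_int (v j))"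
        by (rule sum.cong) (auto simp: c0_def)
      have e2: "(\<Sum>v\<in>?R'. c v * of_int (v j)) = c w * of_int (w j) + (\<Sum>v\<in>R - {r, r'}. c v * of_int (v j))"
        using wnot assms(2) by simp
      have "(\<Sum>v\<in>R. c0 v * of_int (v j)) = c0 r * of_int (r j) + c0 r' * of_int (r' j) + (\<Sum>v\<in>R - {r, r'}. c0 v * of_int (v j))"
        by (rule sum_two_out[OF assms(2) r assms(8)])
      also have "\<dots> = c w * of_int (w j) + (\<Sum>v\<in>R - {r, r'}. c v * of_int (v j))"
        unfolding e1 using assms(8) by (simp add: c0_def w_def algebra_simps)
      also have "\<dots> = 0" using h e2 by simp
      finally show "(\<Sum>v\<in>R. c0 v * of_int (v j)) = 0" .
    qed
    then have z: "\<forall>v\<in>R. c0 v = 0"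
      using assms(5) unfolding indep_def by blast
    then have "c w * of_int \<sigma>' = 0" using r by (auto simp: c0_def)
    then have cw: "c w = 0" using assms(18) by auto
    show "\<forall>v\<in>?R'. c v = 0"
    proof
      fix v assume "v \<in> ?R'"
      then show "c v = 0" using cw z by (auto simp: c0_def split: if_splits)
    qed
  qed
  have "good (V - {a}) ?R'" using assms(20)[OF _ card' roots ind'] assms(2) by simp
  then obtain A where A: "A \<subseteq> V - {a}" "2 * card A \<le> card (V - {a})"
    "\<forall>y. supp_in (V - {a}) y \<longrightarrow> (\<exists>S\<subseteq>A. (\<lambda>j. y j - ind S j) \<in> lat ?R')"
    unfolding good_def by blast
  have sub: "?R' \<subseteq> lat R" using wlat lat_R_sub[OF assms(2), of "R - {r, r'}"] by auto
  have "card (V - {a}) \<le> card V" using assms(1) by (simp add: card_mono)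
  moreover have "\<forall>x. supp_in V x \<longrightarrow> (\<exists>S\<subseteq>A. (\<lambda>j. x j - ind S j) \<in> lat R)"
    using finish1[OF r(1) assms(2) sub _ assms(9) assms(6) assms(11) assms(16) _ A(3)] assms(2) by blast
  ultimately show ?thesis unfolding good_def using A(1,2) by (intro exI[of _ A]) auto
qed

lemma case_bb:
  assumes "finite V" "finite R" "card R = card V" "\<forall>v\<in>R. isroot V v" "indep R" "a \<in> V"
    "{v\<in>R. v a \<noteq> 0} = {r, r'}" "r \<noteq> r'" "r = rt a b \<sigma> \<beta>" "r' = rt a b \<sigma>' \<gamma>"
    "b \<in> V" "b \<noteq> a"
    "\<sigma> = 1 \<or> \<sigma> = -1" "\<beta> = 1 \<or> \<beta> = -1" "\<sigma>' = 1 \<or> \<sigma>' = -1" "\<gamma> = 1 \<or> \<gamma> = -1"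
    "card {v\<in>R. v b \<noteq> 0} = 2"
    "\<And>R'. finite R' \<Longrightarrow> card R' = card (V - {a, b}) \<Longrightarrow> \<forall>v\<in>R'. isroot (V - {a, b}) v \<Longrightarrow> indep R' \<Longrightarrow> good (V - {a, b}) R'"
  shows "good V R"
proof -
  have r: "r \<in> R" "r' \<in> R" using assms(7) by auto
  define k where "k = \<sigma>' * \<beta> - \<sigma> * \<gamma>"
  define w where "w = (\<lambda>j. \<sigma>' * r j - \<sigma> * r' j)"
  have wk: "w = (\<lambda>j. if j = b then k else 0)"
    unfolding w_def k_def assms(9,10) rt_def using assms(12) by (auto simp: fun_eq_iff)
  have wlat: "w \<in> lat R"
    unfolding w_def using lat_sub[OF lat_smult[OF lat_mem[OF assms(2) r(1)], of "\<sigma>'"]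
        lat_smult[OF lat_mem[OF assms(2) r(2)], of "\<sigma>"]] .
  have "k \<noteq> 0"
  proof
    assume k0: "k = 0"
    define c0 :: "(nat\<Rightarrow>int) \<Rightarrow> real" where
      "c0 = (\<lambda>v. if v = r then of_int \<sigma>' else - of_int \<sigma>)"
    have "\<forall>j. (\<Sum>v\<in>{r, r'}. c0 v * of_int (v j)) = 0"
    proof
      fix j
      have "w j = 0" using wk k0 by simp
      then have "real_of_int (\<sigma>' * r j - \<sigma> * r' j) = 0" unfolding w_def by simp
      then show "(\<Sum>v\<in>{r, r'}. c0 v * of_int (v j)) = 0" using assms(8) by (simp add: c0_def)
    qed
    then have "c0 r = 0" using indep_T[OF assms(5,2), of "{r, r'}" c0 r] r by auto
    then show False using assms(15) by (auto simp: c0_def)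
  qed
  then have k2: "k = 2 \<or> k = -2" unfolding k_def using assms(13-16) by auto
  define u where "u = (\<lambda>j. if j = b then 2 else (0::int))"
  have ulat: "u \<in> lat R"
  proof -
    have "(\<lambda>j. (k div 2) * w j) \<in> lat R" by (rule lat_smult[OF wlat])
    moreover have "(\<lambda>j. (k div 2) * w j) = u" unfolding wk u_def using k2 by (auto simp: fun_eq_iff)
    ultimately show ?thesis by simp
  qed
  have degb: "{v\<in>R. v b \<noteq> 0} = {r, r'}"
  proof -
    have "{r, r'} \<subseteq> {v\<in>R. v b \<noteq> 0}" using r assms(9,10,12,14,16) unfolding rt_def by auto
    moreover have "card {r, r'} = card {v\<in>R. v b \<noteq> 0}" using assms(8,17) by simp
    ultimately show ?thesis using assms(2) by (intro card_subset_eq[symmetric]) auto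
  qed
  let ?R' = "R - {r, r'}"
  let ?V' = "V - {a, b}"
  have roots: "\<forall>v\<in>?R'. isroot ?V' v"
  proof
    fix v assume v: "v \<in> ?R'"
    then have "v a = 0" "v b = 0" "isroot V v" using assms(7,4) degb by auto
    then have "isroot (V - {a} - {b}) v" using root_avoid by blast
    moreover have "V - {a} - {b} = ?V'" by auto
    ultimately show "isroot ?V' v" by simp
  qed
  have cardR: "card R \<ge> 2"
  proof -
    have "card {r, r'} \<le> card R" using r assms(2) by (intro card_mono) auto
    then show ?thesis using assms(8) by simp
  qed
  have "card ?R' = card R - 2" using r assms(2,8) by (simp add: card_Diff_subset)
  also have "\<dots> = card ?V'" using assms(3,6,11,12,1) by (simp add: card_Diff_subset)
  finally have card': "card ?R' = card ?V'" .
  have ind': "indep ?R'" using indep_subset[OF assms(5,2)] by blast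
  have "good ?V' ?R'" using assms(18)[OF _ card' roots ind'] assms(2) by simp
  then obtain A where A: "A \<subseteq> ?V'" "2 * card A \<le> card ?V'"
    "\<forall>y. supp_in ?V' y \<longrightarrow> (\<exists>S\<subseteq>A. (\<lambda>j. y j - ind S j) \<in> lat ?R')"
    unfolding good_def by blast
  have finA: "finite A" using A(1) assms(1) finite_subset by blast
  have bA: "b \<notin> A" using A(1) by auto
  have c1: "card (insert b A) = card A + 1" using finA bA by simp
  have c2: "card ?V' + 2 = card V" using assms(1,3,6,11,12) cardR by (simp add: card_Diff_subset)
  have sub: "lat ?R' \<subseteq> lat R" by (rule lat_subset) (use lat_R_sub[OF assms(2), of ?R'] assms(2) in auto)
  have rep: "\<forall>x. supp_in V x \<longrightarrow> (\<exists>S\<subseteq>insert b A. (\<lambda>j. x j - ind S j) \<in> lat R)"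
  proof (intro allI impI)
    fix x assume x: "supp_in V x"
    define x1 where "x1 = (\<lambda>j. x j - \<sigma> * x a * r j)"
    have x1: "supp_in V x1" "x1 a = 0" unfolding x1_def using elim_props[OF x assms(9,6,11,13)] by auto
    define q where "q = x1 b div 2"
    define \<rho> where "\<rho> = x1 b mod 2"
    have \<rho>: "\<rho> = 0 \<or> \<rho> = 1" unfolding \<rho>_def by auto
    define y where "y = (\<lambda>j. x1 j - q * u j - (if j = b then \<rho> else 0))"
    have "supp_in ?V' y"
      unfolding supp_in_def
    proof (intro allI impI)
      fix j assume j: "j \<notin> ?V'"
      show "y j = 0"
      proof (cases "j = b")
        case True
        then show ?thesis unfolding y_def u_def q_def \<rho>_def using minus_div_mult_eq_mod[of "x1 b" 2] by simp
      next
        case False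
        then have "x1 j = 0" using j x1 unfolding supp_in_def by auto
        then show ?thesis using False unfolding y_def u_def by simp
      qed
    qed
    then obtain S where S: "S \<subseteq> A" "(\<lambda>j. y j - ind S j) \<in> lat ?R'" using A(3) by blast
    define S2 where "S2 = (if \<rho> = 1 then insert b S else S)"
    have S2: "S2 \<subseteq> insert b A" using S(1) unfolding S2_def by auto
    have bS: "b \<notin> S" using S(1) bA by auto
    have "(\<lambda>j. (y j - ind S j) + q * u j) \<in> lat R"
      by (rule lat_add[OF _ lat_smult[OF ulat]]) (use S(2) sub in blast)
    moreover have "(\<lambda>j. (y j - ind S j) + q * u j) = (\<lambda>j. x1 j - ind S2 j)"
      unfolding y_def S2_def ind_def using bS \<rho> by (auto simp: fun_eq_iff)
    ultimately have "(\<lambda>j. x1 j - ind S2 j) \<in> lat R" by simp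
    then have "(\<lambda>j. x j - ind S2 j) \<in> lat R"
      using elim_step[OF lat_mem[OF assms(2) r(1)]] unfolding x1_def by blast
    then show "\<exists>S\<subseteq>insert b A. (\<lambda>j. x j - ind S j) \<in> lat R" using S2 by blast
  qed
  show ?thesis unfolding good_def
    by (rule exI[of _ "insert b A"]) (use A(1,2) assms(11) c1 c2 rep in auto)
qed



lemma main:
  "n = card V \<Longrightarrow> finite V \<Longrightarrow> finite R \<Longrightarrow> card R = card V \<Longrightarrow> \<forall>v\<in>R. isroot V v \<Longrightarrow> indep R \<Longrightarrow> good V R"
proof (induction n arbitrary: V R rule: less_induct)
  case (less n V R)
  show ?case
  proof (cases "V = {}")
    case True
    have "\<forall>x. supp_in V x \<longrightarrow> (\<exists>S\<subseteq>{}. (\<lambda>j. x j - ind S j) \<in> lat R)"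
    proof (intro allI impI)
      fix x assume "supp_in V x"
      then have "(\<lambda>j. x j - ind {} j) = (\<lambda>j. 0)" using True unfolding supp_in_def ind_def by auto
      then show "\<exists>S\<subseteq>{}. (\<lambda>j. x j - ind S j) \<in> lat R" using lat_zero by auto
    qed
    then show ?thesis unfolding good_def using True by auto
  next
    case False
    have IH: "\<And>V' R'. card V' < card V \<Longrightarrow> finite V' \<Longrightarrow> finite R' \<Longrightarrow> card R' = card V' \<Longrightarrow>
        \<forall>v\<in>R'. isroot V' v \<Longrightarrow> indep R' \<Longrightarrow> good V' R'"
      using less.IH less.prems(1) by blast
    note P = less.prems(2-6)
    have cV: "card V > 0" using False P(1) by auto
    have pos: "card {v\<in>R. v a \<noteq> 0} \<ge> 1" if a: "a \<in> V" for a
    proof (rule ccontr)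
      assume "\<not> card {v\<in>R. v a \<noteq> 0} \<ge> 1"
      then have "card {v\<in>R. v a \<noteq> 0} = 0" by simp
      then have "{v\<in>R. v a \<noteq> 0} = {}" using P(2) by simp
      then have "\<forall>v\<in>R. supp_in (V - {a}) v" using P(4) root_supp unfolding supp_in_def by blast
      then have "card R \<le> card (V - {a})" using dim_bound[OF _ P(2) P(5)] P(1) by blast
      then show False using P(3) a cV P(1) by simp
    qed
    show ?thesis
    proof (cases "\<exists>a\<in>V. card {v\<in>R. v a \<noteq> 0} = 1")
      case True
      then obtain a where a: "a \<in> V" "card {v\<in>R. v a \<noteq> 0} = 1" by blast
      then obtain r where r: "{v\<in>R. v a \<noteq> 0} = {r}" using card_1_singletonE[OF a(2)] by blast
      show ?thesis
        by (rule case_leaf[OF P(1-5) a(1) r]) (rule IH, use a P(1) cV card_Diff1_less in auto)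
    next
      case False
      have "(\<Sum>a\<in>V. 2) = (\<Sum>a\<in>V. card {v\<in>R. v a \<noteq> 0})"
        using deg_sum[OF P(1,2,4)] P(3) by simp
      then have all2: "card {v\<in>R. v a \<noteq> 0} = 2" if "a \<in> V" for a
      proof -
        have le: "2 \<le> card {v\<in>R. v a \<noteq> 0}" if "a \<in> V" for a
        proof -
          have "card {v\<in>R. v a \<noteq> 0} \<noteq> 1" using False that by blast
          then show ?thesis using pos[OF that] by linarith
        qed
        show ?thesis
          using sum_mono_inv[of "\<lambda>_. 2::nat" V "\<lambda>a. card {v\<in>R. v a \<noteq> 0}", OF \<open>(\<Sum>a\<in>V. 2) = _\<close> le that P(1)] by simp
      qed
      obtain a where a: "a \<in> V" using \<open>V \<noteq> {}\<close> by blast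
      obtain r r' where rr: "{v\<in>R. v a \<noteq> 0} = {r, r'}" "r \<noteq> r'"
        using all2[OF a] by (auto simp: card_2_iff)
      have r: "r \<in> R" "r a \<noteq> 0" "r' \<in> R" "r' a \<noteq> 0" using rr(1) by blast+
      obtain b \<sigma> \<beta> where rb: "b \<in> V" "b \<noteq> a" "\<sigma> = 1 \<or> \<sigma> = -1" "\<beta> = 1 \<or> \<beta> = -1" "r = rt a b \<sigma> \<beta>"
        using root_at[of V r a] P(4) r by blast
      obtain c \<sigma>' \<gamma> where rc: "c \<in> V" "c \<noteq> a" "\<sigma>' = 1 \<or> \<sigma>' = -1" "\<gamma> = 1 \<or> \<gamma> = -1" "r' = rt a c \<sigma>' \<gamma>"
        using root_at[of V r' a] P(4) r by blast
      show ?thesis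
      proof (cases "b = c")
        case True
        have lt: "card (V - {a, b}) < card V"
          using P(1) a rb(1) by (intro psubset_card_mono) auto
        show ?thesis
          by (rule case_bb[OF P(1-5) a rr rb(5) rc(5)[unfolded True[symmetric]] rb(1,2) rb(3,4) rc(3,4) all2[OF rb(1)]])
             (rule IH, use lt P(1) in auto)
      next
        case False
        show ?thesis
          by (rule case_bc[OF P(1-5) a rr rb(5) rc(5) rb(1) rc(1) rb(2) rc(2) False rb(3,4) rc(3,4)])
             (rule IH, use a P(1) cV card_Diff1_less in auto)
      qed
    qed
  qed
qed



lemma sum_two_pt:
  assumes "finite A" "a \<in> A" "b \<in> A" "a \<noteq> b" "\<And>x. x \<in> A \<Longrightarrow> x \<noteq> a \<Longrightarrow> x \<noteq> b \<Longrightarrow> f x = 0"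
  shows "sum f A = f a + f b"
proof -
  have "sum f A = sum f {a, b}"
    by (rule sum.mono_neutral_right) (use assms in auto)
  then show ?thesis using assms(4) by simp
qed

lemma int_sq_ne2: "(z::int)^2 \<noteq> 2"
proof
  assume h: "z^2 = 2"
  show False
  proof (cases "z \<ge> 2 \<or> z \<le> -2")
    case True
    then have "4 \<le> z * z"
    proof
      assume "z \<ge> 2" then show ?thesis using mult_mono[of 2 z 2 z] by simp
    next
      assume "z \<le> -2" then show ?thesis using mult_mono[of 2 "-z" 2 "-z"] by simp
    qed
    then show False using h by (simp add: power2_eq_square)
  next
    case False
    then have "z = -1 \<or> z = 0 \<or> z = 1" by auto
    then show False using h by auto
  qed
qed

lemma Dn_root_isroot:
  assumes "x \<in> Dn_roots n"
  shows "isroot {..<n} x"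
proof -
  have x0: "\<forall>i\<ge>n. x i = 0" and sq: "(\<Sum>i<n. (x i)^2) = 2"
    using assms unfolding Dn_roots_def Dn_def by auto
  define N where "N = {i\<in>{..<n}. x i \<noteq> 0}"
  have finN: "finite N" unfolding N_def by simp
  have sqN: "(\<Sum>i\<in>N. (x i)^2) = 2"
  proof -
    have "(\<Sum>i\<in>N. (x i)^2) = (\<Sum>i<n. (x i)^2)" unfolding N_def by (rule sum.mono_neutral_left) auto
    then show ?thesis using sq by simp
  qed
  have ge1: "1 \<le> (x i)^2" if "i \<in> N" for i
  proof -
    have "0 < (x i)^2" using that unfolding N_def by simp
    then show ?thesis by linarith
  qed
  have "int (card N) = (\<Sum>i\<in>N. 1)" by simp
  also have "\<dots> \<le> (\<Sum>i\<in>N. (x i)^2)" by (rule sum_mono) (rule ge1)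
  finally have cN: "card N \<le> 2" using sqN by simp
  have "N \<noteq> {}" using sqN by auto
  then have "card N \<noteq> 0" using finN by simp
  moreover have "card N \<noteq> 1"
  proof
    assume "card N = 1"
    then obtain a where "N = {a}" using card_1_singletonE by blast
    then show False using sqN int_sq_ne2 by simp
  qed
  ultimately have "card N = 2" using cN by linarith
  then obtain a b where ab: "N = {a, b}" "a \<noteq> b" by (auto simp: card_2_iff)
  have s2: "(x a)^2 + (x b)^2 = 2" using sqN ab by simp
  have "1 \<le> (x a)^2" "1 \<le> (x b)^2" using ge1 ab(1) by auto
  then have "(x a)^2 = 1" "(x b)^2 = 1" using s2 by linarith+
  then have sa: "x a = 1 \<or> x a = -1" and sb: "x b = 1 \<or> x b = -1" by (auto simp: power2_eq_1_iff)
  have inN: "a \<in> {..<n}" "b \<in> {..<n}" using ab(1) unfolding N_def by auto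
  have "x = rt a b (x a) (x b)"
  proof
    fix j
    show "x j = rt a b (x a) (x b) j"
    proof (cases "j = a \<or> j = b")
      case True then show ?thesis unfolding rt_def using ab(2) by auto
    next
      case False
      then have "j \<notin> N" using ab(1) by auto
      then have "x j = 0" using x0 unfolding N_def by (cases "j < n") auto
      then show ?thesis unfolding rt_def using False by auto
    qed
  qed
  then show ?thesis unfolding isroot_def using inN ab(2) sa sb by blast
qed

lemma fam_inj:
  assumes "lin_indep n r"
  shows "inj_on r {..<n}"
proof (rule inj_onI, rule ccontr)
  fix i k assume h: "i \<in> {..<n}" "k \<in> {..<n}" "r i = r k" "i \<noteq> k"
  define c :: "nat \<Rightarrow> real" where "c = (\<lambda>l. if l = i then 1 else if l = k then -1 else 0)"
  have "\<forall>j. (\<Sum>l<n. c l * real_of_int (r l j)) = 0"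
  proof
    fix j
    have "(\<Sum>l<n. c l * real_of_int (r l j)) = c i * real_of_int (r i j) + c k * real_of_int (r k j)"
      by (rule sum_two_pt) (use h in \<open>auto simp: c_def\<close>)
    then show "(\<Sum>l<n. c l * real_of_int (r l j)) = 0" using h by (simp add: c_def)
  qed
  then have "c i = 0" using assms h(1) unfolding lin_indep_def by blast
  then show False by (simp add: c_def)
qed

lemma span_lat:
  assumes "inj_on r {..<n}"
  shows "int_span n r = lat (r ` {..<n})"
proof
  show "int_span n r \<subseteq> lat (r ` {..<n})"
  proof
    fix x assume "x \<in> int_span n r"
    then obtain c where x: "x = (\<lambda>j. \<Sum>i<n. c i * r i j)" unfolding int_span_def by auto
    define c' where "c' = (\<lambda>v. c (the_inv_into {..<n} r v))"
    have "x = (\<lambda>j. \<Sum>v\<in>r ` {..<n}. c' v * v j)"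
      unfolding x c'_def using assms by (simp add: sum.reindex the_inv_into_f_f)
    then show "x \<in> lat (r ` {..<n})" unfolding lat_def by blast
  qed
next
  show "lat (r ` {..<n}) \<subseteq> int_span n r"
  proof
    fix x assume "x \<in> lat (r ` {..<n})"
    then obtain c where x: "x = (\<lambda>j. \<Sum>v\<in>r ` {..<n}. c v * v j)" unfolding lat_def by auto
    have "x = (\<lambda>j. \<Sum>i<n. (c \<circ> r) i * r i j)" unfolding x using assms by (simp add: sum.reindex)
    then show "x \<in> int_span n r" unfolding int_span_def by blast
  qed
qed

lemma fam_indep:
  assumes "inj_on r {..<n}" "lin_indep n r"
  shows "indep (r ` {..<n})"
  unfolding indep_def
proof (intro allI impI ballI)
  fix c :: "(nat\<Rightarrow>int) \<Rightarrow> real" and v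
  assume h: "\<forall>j. (\<Sum>v\<in>r ` {..<n}. c v * real_of_int (v j)) = 0" and v: "v \<in> r ` {..<n}"
  have "\<forall>j. (\<Sum>i<n. (c \<circ> r) i * real_of_int (r i j)) = 0"
    using h assms(1) by (simp add: sum.reindex)
  then have "\<forall>i<n. (c \<circ> r) i = 0" using assms(2) unfolding lin_indep_def by blast
  then show "c v = 0" using v by auto
qed

lemma Dn_sub: "x \<in> Dn n \<Longrightarrow> y \<in> Dn n \<Longrightarrow> (\<lambda>j. x j - y j) \<in> Dn n"
  unfolding Dn_def by (auto simp: sum_subtractf)

lemma lat_Dn:
  assumes "finite R" "R \<subseteq> Dn n"
  shows "lat R \<subseteq> Dn n"
proof
  fix x assume "x \<in> lat R"
  then obtain c where x: "x = (\<lambda>j. \<Sum>v\<in>R. c v * v j)" unfolding lat_def by auto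
  have "\<forall>i\<ge>n. x i = 0" using assms(2) unfolding x Dn_def by (auto intro!: sum.neutral)
  moreover have "(\<Sum>i<n. x i) = (\<Sum>v\<in>R. c v * (\<Sum>i<n. v i))"
    unfolding x by (simp add: sum.swap[of _ "{..<n}"] sum_distrib_left)
  moreover have "even (\<Sum>v\<in>R. c v * (\<Sum>i<n. v i))"
    using assms(2) unfolding Dn_def by (intro dvd_sum) auto
  ultimately show "x \<in> Dn n" unfolding Dn_def by simp
qed

lemma sum_ind: "S \<subseteq> {..<n} \<Longrightarrow> (\<Sum>i<n. ind S i) = int (card S)"
  unfolding ind_def by (simp add: sum.If_cases Int_absorb1)

lemma even_subsets:
  assumes "finite A" "A \<noteq> {}"
  shows "card {S. S \<subseteq> A \<and> even (card S)} = 2 ^ (card A - 1)"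
proof -
  have eo: "card {T. T \<subseteq> A \<and> {} \<subseteq> T \<and> even (card T)} = card {T. T \<subseteq> A \<and> {} \<subseteq> T \<and> odd (card T)}"
    using card_subsupersets_even_odd[OF assms(1)] assms(2) by blast
  have "Pow A = {S. S \<subseteq> A \<and> even (card S)} \<union> {S. S \<subseteq> A \<and> odd (card S)}" by auto
  then have "2 ^ card A = card {S. S \<subseteq> A \<and> even (card S)} + card {S. S \<subseteq> A \<and> odd (card S)}"
  proof -
    have "card ({S. S \<subseteq> A \<and> even (card S)} \<union> {S. S \<subseteq> A \<and> odd (card S)}) = card {S. S \<subseteq> A \<and> even (card S)} + card {S. S \<subseteq> A \<and> odd (card S)}"
      by (rule card_Un_disjoint) (use assms(1) in auto)
    then show ?thesis using \<open>Pow A = _\<close> card_Pow[OF assms(1)] by simp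
  qed
  then have "2 ^ card A = 2 * card {S. S \<subseteq> A \<and> even (card S)}" using eo by simp
  moreover have "card A \<ge> 1" using assms by (simp add: Suc_leI card_gt_0_iff)
  ultimately show ?thesis
    by (metis (no_types, lifting) Suc_diff_le diff_Suc_1 nonzero_mult_div_cancel_left power_Suc zero_neq_numeral)
qed



definition cosf :: "(nat\<Rightarrow>int) set \<Rightarrow> (nat\<Rightarrow>int) \<Rightarrow> (nat\<Rightarrow>int) set" where
  "cosf L = (\<lambda>x. {(\<lambda>j. x j + y j) | y. y \<in> L})"

lemma lattice_index_cosf: "lattice_index M L = card (cosf L ` M)"
  unfolding lattice_index_def cosf_def by simp

lemma cosf_memI: "y \<in> L \<Longrightarrow> u = (\<lambda>j. x j + y j) \<Longrightarrow> u \<in> cosf L x"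
  unfolding cosf_def by blast

lemma upper:
  assumes "d \<ge> 1" "\<forall>i<2*d. r i \<in> Dn_roots (2*d)" "lin_indep (2*d) r"
  shows "finite (cosf (int_span (2*d) r) ` Dn (2*d)) \<and> card (cosf (int_span (2*d) r) ` Dn (2*d)) \<le> 2^(d-1)"
proof -
  define n where "n = 2*d"
  define R where "R = r ` {..<n}"
  have inj: "inj_on r {..<n}" using fam_inj assms(3) unfolding n_def by blast
  have finR: "finite R" unfolding R_def by simp
  have cardR: "card R = card {..<n}" unfolding R_def using inj by (simp add: card_image)
  have roots: "\<forall>v\<in>R. isroot {..<n} v" using assms(2) Dn_root_isroot unfolding R_def n_def by auto
  have ind: "indep R" using fam_indep[OF inj] assms(3) unfolding R_def n_def by blast
  have "good {..<n} R" by (rule main[OF refl _ finR cardR roots ind]) simp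
  then obtain A where A: "A \<subseteq> {..<n}" "2 * card A \<le> card {..<n}"
    "\<forall>x. supp_in {..<n} x \<longrightarrow> (\<exists>S\<subseteq>A. (\<lambda>j. x j - ind S j) \<in> lat R)"
    unfolding good_def by blast
  define L where "L = int_span n r"
  have L: "L = lat R" unfolding L_def R_def using span_lat[OF inj] .
  have RD: "R \<subseteq> Dn n" using assms(2) unfolding R_def n_def Dn_roots_def by auto
  have LD: "L \<subseteq> Dn n" unfolding L using lat_Dn[OF finR RD] .
  define E where "E = {S. S \<subseteq> A \<and> even (card S)}"
  have finA: "finite A" using A(1) finite_subset by blast
  have finE: "finite E" unfolding E_def using finA by simp
  have sub: "cosf L ` Dn n \<subseteq> (\<lambda>S. cosf L (ind S)) ` E"
  proof
    fix C assume "C \<in> cosf L ` Dn n"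
    then obtain x where x: "x \<in> Dn n" "C = cosf L x" by blast
    have "supp_in {..<n} x" using x(1) unfolding Dn_def supp_in_def by auto
    then obtain S where S: "S \<subseteq> A" "(\<lambda>j. x j - ind S j) \<in> lat R" using A(3) by blast
    define z where "z = (\<lambda>j. x j - ind S j)"
    have zL: "z \<in> L" unfolding z_def L using S(2) .
    have "ind S = (\<lambda>j. x j - z j)" unfolding z_def by simp
    then have "ind S \<in> Dn n" using Dn_sub[OF x(1)] zL LD by auto
    then have "even (\<Sum>i<n. ind S i)" unfolding Dn_def by simp
    then have "even (card S)" using sum_ind[of S n] S(1) A(1) by auto
    then have SE: "S \<in> E" unfolding E_def using S(1) by simp
    have "cosf L x = cosf L (ind S)"
    proof
      show "cosf L x \<subseteq> cosf L (ind S)"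
      proof
        fix u assume "u \<in> cosf L x"
        then obtain y where y: "y \<in> L" "u = (\<lambda>j. x j + y j)" unfolding cosf_def by blast
        have "(\<lambda>j. z j + y j) \<in> L" using lat_add zL y(1) unfolding L by blast
        moreover have "u = (\<lambda>j. ind S j + (z j + y j))" unfolding y(2) z_def by auto
        ultimately show "u \<in> cosf L (ind S)" by (rule cosf_memI)
      qed
    next
      show "cosf L (ind S) \<subseteq> cosf L x"
      proof
        fix u assume "u \<in> cosf L (ind S)"
        then obtain y where y: "y \<in> L" "u = (\<lambda>j. ind S j + y j)" unfolding cosf_def by blast
        have "(\<lambda>j. y j - z j) \<in> L" using lat_sub zL y(1) unfolding L by blast
        moreover have "u = (\<lambda>j. x j + (y j - z j))" unfolding y(2) z_def by auto
        ultimately show "u \<in> cosf L x" by (rule cosf_memI)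
      qed
    qed
    then show "C \<in> (\<lambda>S. cosf L (ind S)) ` E" using x(2) SE by blast
  qed
  have fin: "finite (cosf L ` Dn n)" using finite_subset[OF sub] finE by blast
  have "card (cosf L ` Dn n) \<le> card ((\<lambda>S. cosf L (ind S)) ` E)" by (rule card_mono[OF _ sub]) (use finE in simp)
  also have "\<dots> \<le> card E" using finE by (rule card_image_le)
  also have "\<dots> \<le> 2^(d-1)"
  proof (cases "A = {}")
    case True
    then have "E = {{}}" unfolding E_def by auto
    then show ?thesis by simp
  next
    case False
    have "card E = 2^(card A - 1)" unfolding E_def by (rule even_subsets[OF finA False])
    moreover have "card A \<le> d" using A(2) unfolding n_def by simp
    ultimately show ?thesis by (simp add: power_increasing)
  qed
  finally show ?thesis using fin unfolding L_def n_def by simp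
qed



definition wit :: "nat \<Rightarrow> nat \<Rightarrow> nat \<Rightarrow> int" where
  "wit d i j = (if j < 2*d \<and> j div 2 = i div 2 then (if odd i \<and> odd j then -1 else 1) else 0)"

lemma div2_eq: "(j::nat) div 2 = m \<longleftrightarrow> j = 2*m \<or> j = 2*m+1"
  by presburger

lemma wit_rt:
  assumes "i < 2*d"
  shows "wit d i = rt (2*(i div 2)) (2*(i div 2)+1) 1 (if odd i then -1 else 1)"
proof
  fix j
  have m: "2*(i div 2) + 1 < 2*d" using assms by presburger
  show "wit d i j = rt (2*(i div 2)) (2*(i div 2)+1) 1 (if odd i then -1 else 1) j"
    unfolding wit_def rt_def using m div2_eq[of j "i div 2"] by auto
qed

lemma wit_root:
  assumes "i < 2*d"
  shows "wit d i \<in> Dn_roots (2*d)"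
proof -
  define a where "a = 2*(i div 2)"
  define t :: int where "t = (if odd i then -1 else 1)"
  have ab: "a < 2*d" "a + 1 < 2*d" unfolding a_def using assms by presburger+
  have w: "wit d i = rt a (a+1) 1 t" unfolding a_def t_def by (rule wit_rt[OF assms])
  have s1: "(\<Sum>j<2*d. rt a (a+1) 1 t j) = 1 + t"
    by (subst sum_two_pt[of _ a "a+1"]) (use ab in \<open>auto simp: rt_def\<close>)
  have s2: "(\<Sum>j<2*d. (rt a (a+1) 1 t j)^2) = 1 + t^2"
    by (subst sum_two_pt[of _ a "a+1"]) (use ab in \<open>auto simp: rt_def\<close>)
  have "even (1 + t)" "1 + t^2 = 2" unfolding t_def by auto
  then show ?thesis unfolding Dn_roots_def Dn_def w using s1 s2 ab by (auto simp: rt_def)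
qed

lemma wit_indep:
  assumes "d \<ge> 1"
  shows "lin_indep (2*d) (wit d)"
  unfolding lin_indep_def
proof (intro allI impI)
  fix c :: "nat \<Rightarrow> real" and i
  assume h: "\<forall>j. (\<Sum>i<2*d. c i * real_of_int (wit d i j)) = 0" and i: "i < 2*d"
  define a where "a = 2*(i div 2)"
  have ab: "a < 2*d" "a + 1 < 2*d" unfolding a_def using i by presburger+
  have ev: "(\<Sum>i'<2*d. c i' * real_of_int (wit d i' j)) = c a * real_of_int (wit d a j) + c (a+1) * real_of_int (wit d (a+1) j)"
    if "j = a \<or> j = a + 1" for j
  proof (rule sum_two_pt)
    fix x assume x: "x \<in> {..<2*d}" "x \<noteq> a" "x \<noteq> a + 1"
    have "x div 2 \<noteq> a div 2" using x(2,3) unfolding a_def by presburger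
    moreover have "j div 2 = a div 2" using that unfolding a_def by presburger
    ultimately show "c x * real_of_int (wit d x j) = 0" unfolding wit_def by auto
  qed (use ab in auto)
  have "a div 2 = i div 2" "(a+1) div 2 = i div 2" "even a" unfolding a_def by presburger+
  then have vals: "wit d a a = 1" "wit d (a+1) a = 1" "wit d a (a+1) = 1" "wit d (a+1) (a+1) = -1"
    unfolding wit_def using ab by auto
  have e1: "c a + c (a+1) = 0" using h ev[of a] vals by simp
  have e2: "c a - c (a+1) = 0" using h ev[of "a+1"] vals by simp
  have "i = a \<or> i = a + 1" unfolding a_def by presburger
  then show "c i = 0" using e1 e2 by auto
qed

lemma wit_span_even:
  assumes "y \<in> int_span (2*d) (wit d)"
  shows "even (y (2*k) + y (2*k+1))"
proof -
  obtain c where y: "y = (\<lambda>j. \<Sum>i<2*d. c i * wit d i j)" using assms unfolding int_span_def by auto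
  have "y (2*k) + y (2*k+1) = (\<Sum>i<2*d. c i * (wit d i (2*k) + wit d i (2*k+1)))"
    unfolding y by (simp add: sum.distrib distrib_left)
  moreover have "even (wit d i (2*k) + wit d i (2*k+1))" for i
  proof -
    have q: "(2*k) div 2 = k" "(2*k+1) div 2 = k" "even (2*k)" "odd (2*k+1)" "2*k < 2*d \<longleftrightarrow> 2*k+1 < 2*d" by presburger+
    show ?thesis unfolding wit_def q by auto
  qed
  ultimately show ?thesis by (simp add: dvd_sum)
qed

lemma lower_part:
  assumes "d \<ge> 1"
  shows "card {S. S \<subseteq> {..<d} \<and> even (card S)} \<le> card (cosf (int_span (2*d) (wit d)) ` Dn (2*d))"
proof -
  define L where "L = int_span (2*d) (wit d)"
  have fin: "finite (cosf L ` Dn (2*d))"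
    using upper[OF assms _ wit_indep[OF assms]] wit_root unfolding L_def by blast
  define g where "g = (\<lambda>S. ind ((\<lambda>k. 2*k) ` S))"
  define E where "E = {S. S \<subseteq> {..<d} \<and> even (card S)}"
  have gD: "g S \<in> Dn (2*d)" if "S \<in> E" for S
  proof -
    have sub: "(\<lambda>k. 2*k) ` S \<subseteq> {..<2*d}" using that unfolding E_def by auto
    have "card ((\<lambda>k. 2*k) ` S) = card S" by (rule card_image) (auto simp: inj_on_def)
    then have "(\<Sum>i<2*d. g S i) = int (card S)" unfolding g_def using sum_ind[OF sub] by simp
    moreover have "\<forall>i\<ge>2*d. g S i = 0" using sub unfolding g_def ind_def by auto
    ultimately show ?thesis using that unfolding Dn_def E_def by auto
  qed
  have zL: "(\<lambda>j. 0) \<in> L" unfolding L_def int_span_def by (rule CollectI, rule exI[of _ "\<lambda>i. 0"]) simp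
  have inj: "inj_on (\<lambda>S. cosf L (g S)) E"
  proof (rule inj_onI)
    fix S S' assume S: "S \<in> E" "S' \<in> E" and eq: "cosf L (g S) = cosf L (g S')"
    have "g S \<in> cosf L (g S)" by (rule cosf_memI[OF zL]) simp
    then have "g S \<in> cosf L (g S')" using eq by simp
    then obtain y where y: "y \<in> L" "g S = (\<lambda>j. g S' j + y j)" unfolding cosf_def by blast
    show "S = S'"
    proof (rule set_eqI)
      fix k
      have ev: "even (y (2*k) + y (2*k+1))" using wit_span_even y(1) unfolding L_def by blast
      have "y (2*k) = g S (2*k) - g S' (2*k)" "y (2*k+1) = g S (2*k+1) - g S' (2*k+1)" using y(2) by (simp_all add: fun_eq_iff)
      moreover have "g T (2*k+1) = 0" for T unfolding g_def ind_def by (auto, presburger)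
      moreover have "g T (2*k) = (if k \<in> T then 1 else 0)" for T unfolding g_def ind_def by auto
      ultimately show "k \<in> S \<longleftrightarrow> k \<in> S'" using ev by (auto split: if_splits)
    qed
  qed
  have "(\<lambda>S. cosf L (g S)) ` E \<subseteq> cosf L ` Dn (2*d)" using gD by blast
  from card_inj_on_le[OF inj this fin] show ?thesis unfolding E_def L_def .
qed

theorem proposition15p2:
  fixes d :: nat
  assumes "d \<ge> 1"
  defines "S \<equiv> {lattice_index (Dn (2*d)) (int_span (2*d) r) | r.
                 (\<forall>i<2*d. r i \<in> Dn_roots (2*d)) \<and> lin_indep (2*d) r}"
  shows "(2::nat)^(d-1) \<in> S \<and> (\<forall>k\<in>S. k \<le> 2^(d-1))"
proof
  have "card {S. S \<subseteq> {..<d} \<and> even (card S)} = 2^(d-1)"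
  proof -
    have "0 \<in> {..<d}" using assms(1) by simp
    then have "{..<d} \<noteq> {}" by blast
    then show ?thesis using even_subsets[of "{..<d}"] by simp
  qed
  then have "2^(d-1) \<le> lattice_index (Dn (2*d)) (int_span (2*d) (wit d))"
    using lower_part[OF assms(1)] unfolding lattice_index_cosf by simp
  moreover have "lattice_index (Dn (2*d)) (int_span (2*d) (wit d)) \<le> 2^(d-1)"
    using upper[OF assms(1) _ wit_indep[OF assms(1)]] wit_root unfolding lattice_index_cosf by blast
  ultimately have "lattice_index (Dn (2*d)) (int_span (2*d) (wit d)) = 2^(d-1)" by simp
  moreover have "(\<forall>i<2*d. wit d i \<in> Dn_roots (2*d)) \<and> lin_indep (2*d) (wit d)"
    using wit_root wit_indep[OF assms(1)] by blast
  ultimately show "(2::nat)^(d-1) \<in> S" unfolding S_def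
    by (simp only: mem_Collect_eq) (rule exI[of _ "wit d"], simp)
next
  show "\<forall>k\<in>S. k \<le> 2^(d-1)"
  proof
    fix k assume "k \<in> S"
    then obtain r where r: "k = lattice_index (Dn (2*d)) (int_span (2*d) r)"
      "\<forall>i<2*d. r i \<in> Dn_roots (2*d)" "lin_indep (2*d) r" unfolding S_def by blast
    show "k \<le> 2^(d-1)" using upper[OF assms(1) r(2,3)] unfolding r(1) lattice_index_cosf by simp
  qed
qed


end
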